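(* Let $(X,\ast,u,d)$ be a finite block GL-rack, let $\Delta=\alpha_1\cdots\alpha_n$ be the disjoint cycle decomposition of its diagonal map (fixed points counted as $1$-cycles), and let $A_i=\operatorname{supp}(\alpha_i)$, so $X=\bigsqcup_{i=1}^n A_i$. Let $\widetilde X=\{a_1,\dots,a_n\}$ and $\pi\colon X\to\widetilde X$ the map with $\pi(A_i)=\{a_i\}$. Define on $\widetilde X$ $$a_i\,\tilde\ast\,a_j=\pi(A_i\ast A_j),\qquad \tilde u(a_i)=\pi(u(A_i)),\qquad \tilde d(a_i)=\pi(d(A_i)),$$ where $A_i\ast A_j=\{x\ast y:x\in A_i,y\in A_j\}$. Then these operations are well defined (each of $A_i\ast A_j$, $u(A_i)$, $d(A_i)$ is a single block $A_k$), and $(\widetilde X,\tilde\ast,\tilde u,\tilde d)$ is a GL-quandle.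
   Context: A rack is a set $X$ with a binary operation $\ast$ such that for every $y\in X$ the map $x\mapsto x\ast y$ is a bijection of $X$ and $(x\ast y)\ast z=(x\ast z)\ast(y\ast z)$ for all $x,y,z$. A GL-rack is a quadruple $(X,\ast,u,d)$ where $(X,\ast)$ is a rack and $u,d\colon X\to X$ are maps such that for all $x,y\in X$: $u(d(x\ast x))=d(u(x\ast x))=x$; $u(x\ast y)=u(x)\ast y$ and $d(x\ast y)=d(x)\ast y$; $x\ast u(y)=x\ast d(y)=x\ast y$. A GL-quandle is a GL-rack with $x\ast x=x$ for all $x$. The diagonal map is $\Delta(x)=x\ast x$; for a finite GL-rack it is a bijection and $\Delta=(u\circ d)^{-1}$. A finite GL-rack is a block GL-rack if all cycles in the disjoint cycle decomposition of $\Delta$ (including cycles of length $1$) have the same length. *)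

theory Defs
  imports Main
begin

definition rack :: "'a set \<Rightarrow> ('a \<Rightarrow> 'a \<Rightarrow> 'a) \<Rightarrow> bool" where
  "rack X op \<longleftrightarrow>
     (\<forall>x\<in>X. \<forall>y\<in>X. op x y \<in> X) \<and>
     (\<forall>y\<in>X. bij_betw (\<lambda>x. op x y) X X) \<and>
     (\<forall>x\<in>X. \<forall>y\<in>X. \<forall>z\<in>X. op (op x y) z = op (op x z) (op y z))"

definition GL_rack :: "'a set \<Rightarrow> ('a \<Rightarrow> 'a \<Rightarrow> 'a) \<Rightarrow> ('a \<Rightarrow> 'a) \<Rightarrow> ('a \<Rightarrow> 'a) \<Rightarrow> bool" where
  "GL_rack X op u d \<longleftrightarrow>
     rack X op \<and>
     (\<forall>x\<in>X. u x \<in> X) \<and> (\<forall>x\<in>X. d x \<in> X) \<and>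
     (\<forall>x\<in>X. u (d (op x x)) = x \<and> d (u (op x x)) = x) \<and>
     (\<forall>x\<in>X. \<forall>y\<in>X. u (op x y) = op (u x) y \<and> d (op x y) = op (d x) y) \<and>
     (\<forall>x\<in>X. \<forall>y\<in>X. op x (u y) = op x y \<and> op x (d y) = op x y)"

definition GL_quandle :: "'a set \<Rightarrow> ('a \<Rightarrow> 'a \<Rightarrow> 'a) \<Rightarrow> ('a \<Rightarrow> 'a) \<Rightarrow> ('a \<Rightarrow> 'a) \<Rightarrow> bool" where
  "GL_quandle X op u d \<longleftrightarrow> GL_rack X op u d \<and> (\<forall>x\<in>X. op x x = x)"

definition diag :: "('a \<Rightarrow> 'a \<Rightarrow> 'a) \<Rightarrow> 'a \<Rightarrow> 'a" where
  "diag op x = op x x"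

definition diag_cycle :: "('a \<Rightarrow> 'a \<Rightarrow> 'a) \<Rightarrow> 'a \<Rightarrow> 'a set" where
  "diag_cycle op x = {(diag op ^^ k) x | k. True}"

definition blocks :: "'a set \<Rightarrow> ('a \<Rightarrow> 'a \<Rightarrow> 'a) \<Rightarrow> 'a set set" where
  "blocks X op = diag_cycle op ` X"

definition block_GL_rack :: "'a set \<Rightarrow> ('a \<Rightarrow> 'a \<Rightarrow> 'a) \<Rightarrow> ('a \<Rightarrow> 'a) \<Rightarrow> ('a \<Rightarrow> 'a) \<Rightarrow> bool" where
  "block_GL_rack X op u d \<longleftrightarrow> GL_rack X op u d \<and> finite X \<and>
     (\<forall>x\<in>X. \<forall>y\<in>X. card (diag_cycle op x) = card (diag_cycle op y))"

text \<open>The quotient: the element a_i is represented by the block A_i itself, pi maps x to its block.\<close>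

definition blk_proj :: "('a \<Rightarrow> 'a \<Rightarrow> 'a) \<Rightarrow> 'a \<Rightarrow> 'a set" where
  "blk_proj op x = diag_cycle op x"

definition set_op :: "('a \<Rightarrow> 'a \<Rightarrow> 'a) \<Rightarrow> 'a set \<Rightarrow> 'a set \<Rightarrow> 'a set" where
  "set_op op A B = {op x y | x y. x \<in> A \<and> y \<in> B}"

definition q_op :: "('a \<Rightarrow> 'a \<Rightarrow> 'a) \<Rightarrow> 'a set \<Rightarrow> 'a set \<Rightarrow> 'a set" where
  "q_op op A B = the_elem (blk_proj op ` set_op op A B)"

definition q_map :: "('a \<Rightarrow> 'a \<Rightarrow> 'a) \<Rightarrow> ('a \<Rightarrow> 'a) \<Rightarrow> 'a set \<Rightarrow> 'a set" where
  "q_map op f A = the_elem (blk_proj op ` (f ` A))"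

end

theory Submission
  imports Defs
begin

lemma R_closed: "GL_rack X op u d \<Longrightarrow> x \<in> X \<Longrightarrow> y \<in> X \<Longrightarrow> op x y \<in> X"
  unfolding GL_rack_def rack_def by blast

lemma R_dist: "GL_rack X op u d \<Longrightarrow> x \<in> X \<Longrightarrow> y \<in> X \<Longrightarrow> z \<in> X \<Longrightarrow>
   op (op x y) z = op (op x z) (op y z)"
  unfolding GL_rack_def rack_def by blast

lemma R_surj: "GL_rack X op u d \<Longrightarrow> x \<in> X \<Longrightarrow> y \<in> X \<Longrightarrow> \<exists>w\<in>X. op w y = x"
  unfolding GL_rack_def rack_def bij_betw_def by (metis (no_types, lifting) imageE)

lemma u_closed: "GL_rack X op u d \<Longrightarrow> x \<in> X \<Longrightarrow> u x \<in> X"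
  unfolding GL_rack_def by blast
lemma d_closed: "GL_rack X op u d \<Longrightarrow> x \<in> X \<Longrightarrow> d x \<in> X"
  unfolding GL_rack_def by blast
lemma ud_inv: "GL_rack X op u d \<Longrightarrow> x \<in> X \<Longrightarrow> u (d (op x x)) = x"
  unfolding GL_rack_def by blast
lemma du_inv: "GL_rack X op u d \<Longrightarrow> x \<in> X \<Longrightarrow> d (u (op x x)) = x"
  unfolding GL_rack_def by blast
lemma u_op: "GL_rack X op u d \<Longrightarrow> x \<in> X \<Longrightarrow> y \<in> X \<Longrightarrow> u (op x y) = op (u x) y"
  unfolding GL_rack_def by blast
lemma d_op: "GL_rack X op u d \<Longrightarrow> x \<in> X \<Longrightarrow> y \<in> X \<Longrightarrow> d (op x y) = op (d x) y"
  unfolding GL_rack_def by blast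
lemma op_u: "GL_rack X op u d \<Longrightarrow> x \<in> X \<Longrightarrow> y \<in> X \<Longrightarrow> op x (u y) = op x y"
  unfolding GL_rack_def by blast
lemma op_d: "GL_rack X op u d \<Longrightarrow> x \<in> X \<Longrightarrow> y \<in> X \<Longrightarrow> op x (d y) = op x y"
  unfolding GL_rack_def by blast

lemma L1: assumes "GL_rack X op u d" "x \<in> X" "y \<in> X"
  shows "op x (op y y) = op x y"
proof -
  obtain w where w: "w \<in> X" "op w y = x" using R_surj[OF assms] by blast
  have "op (op w y) y = op (op w y) (op y y)" using R_dist[OF assms(1) w(1) assms(3) assms(3)] .
  thus ?thesis using w by simp
qed

lemma diag_app: "diag op x = op x x" by (simp add: diag_def)

lemma D_closed: "GL_rack X op u d \<Longrightarrow> x \<in> X \<Longrightarrow> (diag op ^^ k) x \<in> X"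
proof (induction k)
  case (Suc k)
  then show ?case using R_closed diag_app[of op "(diag op ^^ k) x"] by simp
qed simp

lemma L4: assumes "GL_rack X op u d" "x \<in> X" "y \<in> X"
  shows "op x ((diag op ^^ k) y) = op x y"
  using assms(3)
proof (induction k)
  case (Suc k)
  then show ?case using L1[OF assms(1) assms(2) D_closed[OF assms(1) assms(3), of k]]
      diag_app[of op "(diag op ^^ k) y"]
    by (simp del: diag_app)
qed simp

lemma L5: assumes "GL_rack X op u d" "x \<in> X" "y \<in> X"
  shows "(diag op ^^ k) (op x y) = op ((diag op ^^ k) x) y"
proof (induction k)
  case (Suc k)
  have "(diag op ^^ Suc k) (op x y) = diag op (op ((diag op ^^ k) x) y)" using Suc by simp
  also have "\<dots> = op (diag op ((diag op ^^ k) x)) y"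
    using R_dist[OF assms(1) D_closed[OF assms(1) assms(2)] D_closed[OF assms(1) assms(2)] assms(3)]
      diag_app[of op "op ((diag op ^^ k) x) y"] diag_app[of op "(diag op ^^ k) x"]
    by simp
  finally show ?case by simp
qed simp

lemma L6u: assumes "GL_rack X op u d" "x \<in> X"
  shows "(diag op ^^ k) (u x) = u ((diag op ^^ k) x)"
proof (induction k)
  case (Suc k)
  have a: "(diag op ^^ k) x \<in> X" using D_closed[OF assms] .
  have "(diag op ^^ Suc k) (u x) = diag op (u ((diag op ^^ k) x))" using Suc by simp
  also have "\<dots> = u (diag op ((diag op ^^ k) x))"
    using u_op[OF assms(1) a a] op_u[OF assms(1) u_closed[OF assms(1) a] a]
      diag_app[of op "u ((diag op ^^ k) x)"] diag_app[of op "(diag op ^^ k) x"]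
    by simp
  finally show ?case by simp
qed simp

lemma L6d: assumes "GL_rack X op u d" "x \<in> X"
  shows "(diag op ^^ k) (d x) = d ((diag op ^^ k) x)"
proof (induction k)
  case (Suc k)
  have a: "(diag op ^^ k) x \<in> X" using D_closed[OF assms] .
  have "(diag op ^^ Suc k) (d x) = diag op (d ((diag op ^^ k) x))" using Suc by simp
  also have "\<dots> = d (diag op ((diag op ^^ k) x))"
    using d_op[OF assms(1) a a] op_d[OF assms(1) d_closed[OF assms(1) a] a]
      diag_app[of op "d ((diag op ^^ k) x)"] diag_app[of op "(diag op ^^ k) x"]
    by simp
  finally show ?case by simp
qed simp

lemma D_inj: assumes "GL_rack X op u d" shows "inj_on (diag op ^^ k) X"
proof (induction k)
  case 0 then show ?case by simp
next
  case (Suc k)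
  have "inj_on (diag op) X"
    by (rule inj_onI) (metis assms diag_def ud_inv)
  moreover have "(diag op ^^ k) ` X \<subseteq> X" using D_closed[OF assms] by blast
  ultimately have "inj_on (diag op \<circ> (diag op ^^ k)) X"
    by (rule comp_inj_on[OF Suc inj_on_subset]) 
  then show ?case by (simp add: comp_def)
qed

lemma periodic: assumes "GL_rack X op u d" "finite X" "x \<in> X"
  shows "\<exists>p>0. (diag op ^^ p) x = x"
proof -
  let ?f = "\<lambda>k. (diag op ^^ k) x"
  have "\<not> inj_on ?f {..card X}"
  proof
    assume "inj_on ?f {..card X}"
    moreover have "?f ` {..card X} \<subseteq> X" using D_closed[OF assms(1) assms(3)] by blast
    ultimately have "card {..card X} \<le> card X" using card_inj_on_le assms(2) by blast
    thus False by simp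
  qed
  then obtain i j where ij: "i \<noteq> j" "?f i = ?f j" unfolding inj_on_def by blast
  have "\<exists>i j. i < j \<and> ?f i = ?f j"
    using ij by (metis nat_neq_iff)
  then obtain i j where ij: "i < j" "?f i = ?f j" by blast
  have "(diag op ^^ j) x = (diag op ^^ (i + (j - i))) x" using ij by simp
  hence "(diag op ^^ i) ((diag op ^^ (j - i)) x) = (diag op ^^ i) x"
    using ij by (simp only: funpow_add comp_apply)
  hence "(diag op ^^ (j - i)) x = x"
    using D_inj[OF assms(1), of i] D_closed[OF assms(1) assms(3)] assms(3)
    unfolding inj_on_def by blast
  thus ?thesis using ij by (intro exI[of _ "j - i"]) auto
qed

lemma funpow_mult_fix: "(f ^^ p) x = x \<Longrightarrow> (f ^^ (p * m)) x = x"
proof (induction m)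
  case (Suc m)
  have "(f ^^ (p * Suc m)) x = (f ^^ p) ((f ^^ (p * m)) x)"
    by (simp only: mult_Suc_right funpow_add comp_apply)
  then show ?case using Suc by simp
qed simp

lemma cyc_eq: assumes "GL_rack X op u d" "finite X" "x \<in> X" "z \<in> diag_cycle op x"
  shows "diag_cycle op z = diag_cycle op x"
proof -
  obtain k where k: "z = (diag op ^^ k) x" using assms(4) unfolding diag_cycle_def by blast
  obtain p where p: "p > 0" "(diag op ^^ p) x = x" using periodic[OF assms(1-3)] by blast
  have pk: "(diag op ^^ (p * k)) x = x" using funpow_mult_fix[OF p(2)] .
  have kle: "k \<le> p * k" using p(1) by simp
  have "(diag op ^^ (p * k - k)) z = (diag op ^^ (p * k - k + k)) x"
    unfolding k by (simp only: funpow_add comp_apply)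
  hence "x = (diag op ^^ (p * k - k)) z" using pk kle by simp
  have sub: "\<And>a b. b \<in> diag_cycle op a \<Longrightarrow> diag_cycle op b \<subseteq> diag_cycle op a"
    unfolding diag_cycle_def by (auto, metis funpow_add comp_apply)
  have "x \<in> diag_cycle op z" unfolding diag_cycle_def using \<open>x = _\<close> by blast
  then show ?thesis using sub assms(4) by blast
qed

lemma self_in: "x \<in> diag_cycle op x"
  unfolding diag_cycle_def by (auto intro: exI[of _ 0])

lemma proj_single: assumes "GL_rack X op u d" "finite X" "x \<in> X"
  shows "blk_proj op ` diag_cycle op x = {diag_cycle op x}"
proof -
  have H: "\<forall>z\<in>diag_cycle op x. diag_cycle op z = diag_cycle op x" using cyc_eq[OF assms] by blast
  show ?thesis
  proof
    show "blk_proj op ` diag_cycle op x \<subseteq> {diag_cycle op x}"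
      using H unfolding blk_proj_def by blast
    show "{diag_cycle op x} \<subseteq> blk_proj op ` diag_cycle op x"
      using self_in[of x op] unfolding blk_proj_def by blast
  qed
qed

lemma setop_eq: assumes "GL_rack X op u d" "x \<in> X" "y \<in> X"
  shows "set_op op (diag_cycle op x) (diag_cycle op y) = diag_cycle op (op x y)"
proof
  show "set_op op (diag_cycle op x) (diag_cycle op y) \<subseteq> diag_cycle op (op x y)"
    unfolding set_op_def diag_cycle_def
    using L4[OF assms(1) D_closed[OF assms(1) assms(2)] assms(3)] L5[OF assms] by auto
  show "diag_cycle op (op x y) \<subseteq> set_op op (diag_cycle op x) (diag_cycle op y)"
  proof
    fix z assume "z \<in> diag_cycle op (op x y)"
    then obtain k where "z = (diag op ^^ k) (op x y)" unfolding diag_cycle_def by blast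
    hence "z = op ((diag op ^^ k) x) y" using L5[OF assms] by simp
    thus "z \<in> set_op op (diag_cycle op x) (diag_cycle op y)"
      unfolding set_op_def diag_cycle_def by (metis (mono_tags, lifting) funpow_0 mem_Collect_eq)
  qed
qed

lemma uimg: assumes "GL_rack X op u d" "x \<in> X"
  shows "u ` diag_cycle op x = diag_cycle op (u x)"
  unfolding diag_cycle_def using L6u[OF assms] by auto

lemma dimg: assumes "GL_rack X op u d" "x \<in> X"
  shows "d ` diag_cycle op x = diag_cycle op (d x)"
  unfolding diag_cycle_def using L6d[OF assms] by auto

lemma qop_eq: assumes "GL_rack X op u d" "finite X" "x \<in> X" "y \<in> X"
  shows "q_op op (diag_cycle op x) (diag_cycle op y) = diag_cycle op (op x y)"
  unfolding q_op_def using setop_eq[OF assms(1,3,4)] proj_single[OF assms(1,2) R_closed[OF assms(1,3,4)]]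
  by simp

lemma qu_eq: assumes "GL_rack X op u d" "finite X" "x \<in> X"
  shows "q_map op u (diag_cycle op x) = diag_cycle op (u x)"
  unfolding q_map_def using uimg[OF assms(1,3)] proj_single[OF assms(1,2) u_closed[OF assms(1,3)]]
  by simp

lemma qd_eq: assumes "GL_rack X op u d" "finite X" "x \<in> X"
  shows "q_map op d (diag_cycle op x) = diag_cycle op (d x)"
  unfolding q_map_def using dimg[OF assms(1,3)] proj_single[OF assms(1,2) d_closed[OF assms(1,3)]]
  by simp

lemma diag_same: assumes "GL_rack X op u d" "finite X" "x \<in> X"
  shows "diag_cycle op (op x x) = diag_cycle op x"
proof -
  have "op x x = (diag op ^^ 1) x" by (simp add: diag_app)
  hence "op x x \<in> diag_cycle op x" unfolding diag_cycle_def by blast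
  thus ?thesis using cyc_eq[OF assms] by blast
qed

theorem theorem3p5:
  fixes X :: "'a set" and op :: "'a \<Rightarrow> 'a \<Rightarrow> 'a" and u d :: "'a \<Rightarrow> 'a"
  assumes "block_GL_rack X op u d"
  shows "(\<forall>A\<in>blocks X op. \<forall>B\<in>blocks X op. set_op op A B \<in> blocks X op)
       \<and> (\<forall>A\<in>blocks X op. u ` A \<in> blocks X op)
       \<and> (\<forall>A\<in>blocks X op. d ` A \<in> blocks X op)
       \<and> GL_quandle (blocks X op) (q_op op) (q_map op u) (q_map op d)"
proof -
  have G: "GL_rack X op u d" and F: "finite X" using assms unfolding block_GL_rack_def by auto
  let ?C = "diag_cycle op"
  have bl: "blocks X op = ?C ` X" unfolding blocks_def ..
  have p1: "\<forall>A\<in>blocks X op. \<forall>B\<in>blocks X op. set_op op A B \<in> blocks X op"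
    unfolding bl using setop_eq[OF G] R_closed[OF G] by auto
  have p2: "\<forall>A\<in>blocks X op. u ` A \<in> blocks X op"
    unfolding bl using uimg[OF G] u_closed[OF G] by auto
  have p3: "\<forall>A\<in>blocks X op. d ` A \<in> blocks X op"
    unfolding bl using dimg[OF G] d_closed[OF G] by auto
  have qo: "\<And>x y. x \<in> X \<Longrightarrow> y \<in> X \<Longrightarrow> q_op op (?C x) (?C y) = ?C (op x y)"
    using qop_eq[OF G F] by blast
  have qu: "\<And>x. x \<in> X \<Longrightarrow> q_map op u (?C x) = ?C (u x)" using qu_eq[OF G F] by blast
  have qd: "\<And>x. x \<in> X \<Longrightarrow> q_map op d (?C x) = ?C (d x)" using qd_eq[OF G F] by blast
  have cl: "\<forall>A\<in>blocks X op. \<forall>B\<in>blocks X op. q_op op A B \<in> blocks X op"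
    unfolding bl using qo R_closed[OF G] by auto
  have bij: "\<forall>B\<in>blocks X op. bij_betw (\<lambda>A. q_op op A B) (blocks X op) (blocks X op)"
  proof
    fix B assume "B \<in> blocks X op"
    then obtain y where y: "y \<in> X" "B = ?C y" unfolding bl by blast
    have sub: "(\<lambda>A. q_op op A B) ` blocks X op \<subseteq> blocks X op" using cl \<open>B \<in> _\<close> by blast
    have sup: "blocks X op \<subseteq> (\<lambda>A. q_op op A B) ` blocks X op"
    proof
      fix A assume "A \<in> blocks X op"
      then obtain z where z: "z \<in> X" "A = ?C z" unfolding bl by blast
      obtain w where w: "w \<in> X" "op w y = z" using R_surj[OF G z(1) y(1)] by blast
      have "A = q_op op (?C w) B" using qo[OF w(1) y(1)] w z y by simp
      moreover have "?C w \<in> blocks X op" using w bl by simp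
      ultimately show "A \<in> (\<lambda>A. q_op op A B) ` blocks X op" by blast
    qed
    have fin: "finite (blocks X op)" using F bl by simp
    show "bij_betw (\<lambda>A. q_op op A B) (blocks X op) (blocks X op)"
      unfolding bij_betw_def using finite_surj_inj[OF fin sup] sub sup by blast
  qed
  have dist: "\<forall>A\<in>blocks X op. \<forall>B\<in>blocks X op. \<forall>C\<in>blocks X op.
      q_op op (q_op op A B) C = q_op op (q_op op A C) (q_op op B C)"
    unfolding bl
  proof (intro ballI)
    fix A B C assume "A \<in> ?C ` X" "B \<in> ?C ` X" "C \<in> ?C ` X"
    then obtain x y z where xyz: "x \<in> X" "y \<in> X" "z \<in> X" "A = ?C x" "B = ?C y" "C = ?C z"
      by blast
    have c: "op x y \<in> X" "op x z \<in> X" "op y z \<in> X" using R_closed[OF G] xyz by auto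
    show "q_op op (q_op op A B) C = q_op op (q_op op A C) (q_op op B C)"
      using qo[OF xyz(1,2)] qo[OF c(1) xyz(3)] qo[OF xyz(1,3)] qo[OF xyz(2,3)] qo[OF c(2,3)]
        R_dist[OF G xyz(1,2,3)] xyz(4-6) by simp
  qed
  have ucl: "\<forall>A\<in>blocks X op. q_map op u A \<in> blocks X op"
    unfolding bl using qu u_closed[OF G] by auto
  have dcl: "\<forall>A\<in>blocks X op. q_map op d A \<in> blocks X op"
    unfolding bl using qd d_closed[OF G] by auto
  have inv: "\<forall>A\<in>blocks X op. q_map op u (q_map op d (q_op op A A)) = A
       \<and> q_map op d (q_map op u (q_op op A A)) = A"
  proof
    fix A assume "A \<in> blocks X op"
    then obtain x where x: "x \<in> X" "A = ?C x" unfolding bl by blast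
    have e1: "q_op op A A = ?C x" using qo[OF x(1) x(1)] diag_same[OF G F x(1)] x by simp
    have ux: "u (d x) \<in> X" "d (u x) \<in> X" using x u_closed[OF G] d_closed[OF G] by auto
    have "diag op (u (d x)) = u (d (diag op x))"
      using L6u[OF G d_closed[OF G x(1)], of 1] L6d[OF G x(1), of 1] by simp
    hence a: "diag op (u (d x)) = x" using ud_inv[OF G x(1)] by (simp add: diag_app)
    have "diag op (d (u x)) = d (u (diag op x))"
      using L6d[OF G u_closed[OF G x(1)], of 1] L6u[OF G x(1), of 1] by simp
    hence b: "diag op (d (u x)) = x" using du_inv[OF G x(1)] by (simp add: diag_app)
    have "?C (u (d x)) = ?C x" using diag_same[OF G F ux(1)] a by (simp add: diag_app)
    moreover have "?C (d (u x)) = ?C x" using diag_same[OF G F ux(2)] b by (simp add: diag_app)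
    ultimately show "q_map op u (q_map op d (q_op op A A)) = A
       \<and> q_map op d (q_map op u (q_op op A A)) = A"
      using e1 x qu qd u_closed[OF G] d_closed[OF G] by simp
  qed
  have comm: "\<forall>A\<in>blocks X op. \<forall>B\<in>blocks X op.
      q_map op u (q_op op A B) = q_op op (q_map op u A) B \<and> q_map op d (q_op op A B) = q_op op (q_map op d A) B"
    unfolding bl
  proof (intro ballI)
    fix A B assume "A \<in> ?C ` X" "B \<in> ?C ` X"
    then obtain x y where xy: "x \<in> X" "y \<in> X" "A = ?C x" "B = ?C y" by blast
    have c: "op x y \<in> X" "u x \<in> X" "d x \<in> X" using R_closed[OF G] u_closed[OF G] d_closed[OF G] xy by auto
    show "q_map op u (q_op op A B) = q_op op (q_map op u A) B \<and> q_map op d (q_op op A B) = q_op op (q_map op d A) B"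
      using qo[OF xy(1,2)] qu[OF c(1)] qd[OF c(1)] qu[OF xy(1)] qd[OF xy(1)] qo[OF c(2) xy(2)] qo[OF c(3) xy(2)]
        u_op[OF G xy(1,2)] d_op[OF G xy(1,2)] xy(3,4) by simp
  qed
  have comm2: "\<forall>A\<in>blocks X op. \<forall>B\<in>blocks X op.
      q_op op A (q_map op u B) = q_op op A B \<and> q_op op A (q_map op d B) = q_op op A B"
    unfolding bl
  proof (intro ballI)
    fix A B assume "A \<in> ?C ` X" "B \<in> ?C ` X"
    then obtain x y where xy: "x \<in> X" "y \<in> X" "A = ?C x" "B = ?C y" by blast
    have c: "u y \<in> X" "d y \<in> X" using u_closed[OF G] d_closed[OF G] xy by auto
    show "q_op op A (q_map op u B) = q_op op A B \<and> q_op op A (q_map op d B) = q_op op A B"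
      using qo[OF xy(1,2)] qu[OF xy(2)] qd[OF xy(2)] qo[OF xy(1) c(1)] qo[OF xy(1) c(2)]
        op_u[OF G xy(1,2)] op_d[OF G xy(1,2)] xy(3,4) by simp
  qed
  have idem: "\<forall>A\<in>blocks X op. q_op op A A = A"
    unfolding bl using qo diag_same[OF G F] by auto
  show ?thesis
    unfolding GL_quandle_def GL_rack_def rack_def
    using p1 p2 p3 cl bij dist ucl dcl inv comm comm2 idem by (intro conjI) assumption+
qed

end
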